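(* Let $G$ be a connected graph and let $e,f$ be edges of $G$ with $e\,\Theta_G\,f$. Then there exist an endpoint $x$ of $e$ and an endpoint $u$ of $f$ such that $e_{\bar{x}}\,\Theta_{S(G)}\,f_{\bar{u}}$. Moreover, if $G$ is bipartite, then there are two disjoint such pairs $\{e_{\bar{x}},f_{\bar{u}}\}$ of edges of $S(G)$ in relation $\Theta_{S(G)}$.
   Context: For a connected graph $H$ with shortest-path distance $d_H$, two edges $\{x,y\}$ and $\{u,v\}$ of $H$ are in relation $\Theta_H$ if $d_H(x,u)+d_H(y,v)\neq d_H(x,v)+d_H(y,u)$. The full subdivision $S(G)$ is obtained by subdividing every edge of $G$ exactly once; the vertex of $S(G)$ corresponding to a vertex $x$ of $G$ is denoted $\bar{x}$, and the vertex subdividing the edge $\{x,y\}$ is denoted $\overline{xy}$. For $e=\{x,y\}\in E(G)$, $e_{\bar{x}}=\{\bar{x},\overline{xy}\}$ and $e_{\bar{y}}=\{\bar{y},\overline{xy}\}$ are the two edges of $S(G)$ corresponding to $e$. *)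

theory Defs
  imports Main
begin

definition simple_graph :: "'a set \<Rightarrow> 'a set set \<Rightarrow> bool" where
  "simple_graph V E \<longleftrightarrow> (\<forall>e\<in>E. \<exists>x y. x \<in> V \<and> y \<in> V \<and> x \<noteq> y \<and> e = {x, y})"

definition walk :: "'a set set \<Rightarrow> 'a list \<Rightarrow> bool" where
  "walk E xs \<longleftrightarrow> xs \<noteq> [] \<and> (\<forall>i. Suc i < length xs \<longrightarrow> {xs ! i, xs ! Suc i} \<in> E)"

definition walk_betw :: "'a set set \<Rightarrow> 'a \<Rightarrow> 'a list \<Rightarrow> 'a \<Rightarrow> bool" where
  "walk_betw E x xs y \<longleftrightarrow> walk E xs \<and> hd xs = x \<and> last xs = y"

definition connected_graph :: "'a set \<Rightarrow> 'a set set \<Rightarrow> bool" where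
  "connected_graph V E \<longleftrightarrow> V \<noteq> {} \<and> (\<forall>x\<in>V. \<forall>y\<in>V. \<exists>xs. walk_betw E x xs y)"

definition gdist :: "'a set set \<Rightarrow> 'a \<Rightarrow> 'a \<Rightarrow> nat" where
  "gdist E x y = (LEAST n. \<exists>xs. walk_betw E x xs y \<and> length xs = Suc n)"

definition Theta :: "'a set set \<Rightarrow> 'a set \<Rightarrow> 'a set \<Rightarrow> bool" where
  "Theta E e f \<longleftrightarrow> (\<exists>x y u v. e = {x, y} \<and> f = {u, v} \<and>
     gdist E x u + gdist E y v \<noteq> gdist E x v + gdist E y u)"

definition bipartite :: "'a set \<Rightarrow> 'a set set \<Rightarrow> bool" where
  "bipartite V E \<longleftrightarrow> (\<exists>A \<subseteq> V. \<forall>e\<in>E. card (e \<inter> A) = 1)"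

(* Full subdivision S(G): vertex Inl x is \<bar>x, vertex Inr {x,y} subdivides edge {x,y} *)
definition subdiv_V :: "'a set \<Rightarrow> 'a set set \<Rightarrow> ('a + 'a set) set" where
  "subdiv_V V E = Inl ` V \<union> Inr ` E"

definition subdiv_E :: "'a set set \<Rightarrow> ('a + 'a set) set set" where
  "subdiv_E E = {{Inl x, Inr e} | x e. e \<in> E \<and> x \<in> e}"

(* e_{\<bar>x} = {\<bar>x, \<bar>(xy)} *)
definition half_edge :: "'a set \<Rightarrow> 'a \<Rightarrow> ('a + 'a set) set" where
  "half_edge e x = {Inl x, Inr e}"

end

theory Submission
  imports Defs
begin


lemma walk_snoc:
  "walk E (xs @ [z]) \<longleftrightarrow> (xs = [] \<or> (walk E xs \<and> {last xs, z} \<in> E))"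
proof (cases "xs = []")
  case True then show ?thesis by (simp add: walk_def)
next
  case False
  show ?thesis
  proof
    assume w: "walk E (xs @ [z])"
    have "walk E xs"
      unfolding walk_def
    proof (intro conjI allI impI)
      show "xs \<noteq> []" by fact
      fix i assume "Suc i < length xs"
      with w have "{(xs@[z]) ! i, (xs@[z]) ! Suc i} \<in> E" unfolding walk_def by auto
      with \<open>Suc i < length xs\<close> show "{xs ! i, xs ! Suc i} \<in> E" by (simp add: nth_append)
    qed
    moreover have "{last xs, z} \<in> E"
    proof -
      have "Suc (length xs - 1) < length (xs @ [z])" using False by simp
      with w have "{(xs@[z]) ! (length xs - 1), (xs@[z]) ! Suc (length xs - 1)} \<in> E"
        unfolding walk_def by blast
      with False show ?thesis by (simp add: nth_append last_conv_nth)
    qed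
    ultimately show "xs = [] \<or> (walk E xs \<and> {last xs, z} \<in> E)" by simp
  next
    assume "xs = [] \<or> (walk E xs \<and> {last xs, z} \<in> E)"
    with False have w: "walk E xs" and l: "{last xs, z} \<in> E" by auto
    show "walk E (xs @ [z])"
      unfolding walk_def
    proof (intro conjI allI impI)
      show "xs @ [z] \<noteq> []" by simp
      fix i assume i: "Suc i < length (xs @ [z])"
      show "{(xs @ [z]) ! i, (xs @ [z]) ! Suc i} \<in> E"
      proof (cases "Suc i < length xs")
        case True
        with w show ?thesis by (simp add: nth_append walk_def)
      next
        case False
        with i have li: "length xs = Suc i" by simp
        then have "(xs @ [z]) ! i = last xs" using \<open>xs \<noteq> []\<close>
          by (simp add: nth_append last_conv_nth)
        moreover have "(xs @ [z]) ! Suc i = z" using li by (simp add: nth_append)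
        ultimately show ?thesis using l by simp
      qed
    qed
  qed
qed

lemma walk_append:
  assumes "walk E xs" "walk E ys" "last xs = hd ys"
  shows "walk E (xs @ tl ys)"
  using assms(2,3)
proof (induction ys rule: rev_induct)
  case Nil then show ?case by (simp add: walk_def)
next
  case (snoc z ys)
  show ?case
  proof (cases "ys = []")
    case True then show ?thesis using assms(1) by simp
  next
    case False
    have "walk E ys" "{last ys, z} \<in> E" using snoc.prems(1) False by (auto simp: walk_snoc)
    moreover have "last xs = hd ys" using snoc.prems(2) False by simp
    ultimately have w: "walk E (xs @ tl ys)" using snoc.IH by simp
    have "last (xs @ tl ys) = last ys"
      using False \<open>last xs = hd ys\<close> assms(1)
      by (cases ys) (auto simp: walk_def)
    moreover have "tl (ys @ [z]) = tl ys @ [z]" using False by simp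
    ultimately show ?thesis using w \<open>{last ys, z} \<in> E\<close>
      by (metis append_assoc walk_snoc)
  qed
qed

lemma walk_rev:
  assumes "walk E xs" shows "walk E (rev xs)"
  unfolding walk_def
proof (intro conjI allI impI)
  show "rev xs \<noteq> []" using assms by (simp add: walk_def)
  fix i assume i: "Suc i < length (rev xs)"
  let ?n = "length xs"
  have "Suc (?n - 2 - i) < ?n" using i by simp
  with assms have "{xs ! (?n - 2 - i), xs ! Suc (?n - 2 - i)} \<in> E" by (simp add: walk_def)
  moreover have "Suc (?n - 2 - i) = ?n - 1 - i" using i by simp
  moreover have "rev xs ! i = xs ! (?n - 1 - i)" using i by (simp add: rev_nth)
  moreover have "rev xs ! Suc i = xs ! (?n - 2 - i)" using i by (simp add: rev_nth)
  ultimately show "{rev xs ! i, rev xs ! Suc i} \<in> E" by (simp add: insert_commute)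
qed

definition reach :: "'a set set \<Rightarrow> 'a \<Rightarrow> 'a \<Rightarrow> bool" where
  "reach E a b \<longleftrightarrow> (\<exists>xs. walk_betw E a xs b)"

lemma walk_betw_rev: "walk_betw E a xs b \<Longrightarrow> walk_betw E b (rev xs) a"
  by (auto simp: walk_betw_def walk_rev hd_rev last_rev)

lemma walk_betw_append:
  "walk_betw E a xs b \<Longrightarrow> walk_betw E b ys c \<Longrightarrow>
   walk_betw E a (xs @ tl ys) c \<and> length (xs @ tl ys) = length xs + length ys - 1"
  unfolding walk_betw_def
  apply (intro conjI)
  apply (simp add: walk_append)
  apply (cases xs; simp add: walk_def)
  apply (cases ys; auto simp: walk_def)
  apply (cases ys; auto simp: walk_def)
  done

lemma reach_sym: "reach E a b \<Longrightarrow> reach E b a"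
  unfolding reach_def by (metis walk_betw_rev)

lemma reach_trans: "reach E a b \<Longrightarrow> reach E b c \<Longrightarrow> reach E a c"
  unfolding reach_def by (metis walk_betw_append)

lemma reach_edge: "{a, b} \<in> E \<Longrightarrow> reach E a b"
  unfolding reach_def walk_betw_def
  by (rule exI[of _ "[a,b]"]) (auto simp: walk_def less_Suc_eq)

lemma reach_refl: "reach E a a"
  unfolding reach_def walk_betw_def
  by (rule exI[of _ "[a]"]) (auto simp: walk_def)

lemma gdist_sym: "gdist E a b = gdist E b a"
proof -
  have "(\<exists>xs. walk_betw E a xs b \<and> length xs = Suc n) \<longleftrightarrow> (\<exists>xs. walk_betw E b xs a \<and> length xs = Suc n)" for n
    by (metis length_rev walk_betw_rev)
  then show ?thesis unfolding gdist_def by simp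
qed

lemma gdist_le: "walk_betw E a xs b \<Longrightarrow> gdist E a b + 1 \<le> length xs"
proof -
  assume w: "walk_betw E a xs b"
  then have ne: "xs \<noteq> []" by (simp add: walk_betw_def walk_def)
  have "gdist E a b \<le> length xs - 1"
    unfolding gdist_def by (rule Least_le) (use w ne in auto)
  then show ?thesis using ne by (cases xs) auto
qed

lemma gdist_ex: "reach E a b \<Longrightarrow> \<exists>ys. walk_betw E a ys b \<and> length ys = Suc (gdist E a b)"
proof -
  assume "reach E a b"
  then obtain xs where w: "walk_betw E a xs b" unfolding reach_def by blast
  then have ne: "xs \<noteq> []" by (simp add: walk_betw_def walk_def)
  have "\<exists>ys. walk_betw E a ys b \<and> length ys = Suc (length xs - 1)" using w ne by auto
  then show ?thesis unfolding gdist_def by (rule LeastI)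
qed

lemma gdist_tri: "reach E a b \<Longrightarrow> reach E b c \<Longrightarrow> gdist E a c \<le> gdist E a b + gdist E b c"
proof -
  assume "reach E a b" "reach E b c"
  then obtain xs ys where "walk_betw E a xs b" "length xs = Suc (gdist E a b)"
    "walk_betw E b ys c" "length ys = Suc (gdist E b c)" using gdist_ex by metis
  then show ?thesis using walk_betw_append[of E a xs b ys c] gdist_le by fastforce
qed

lemma gdist_edge: "{a, b} \<in> E \<Longrightarrow> gdist E a b \<le> 1"
proof -
  assume "{a, b} \<in> E"
  then have "walk_betw E a [a,b] b" by (auto simp: walk_betw_def walk_def less_Suc_eq)
  then show ?thesis using gdist_le by fastforce
qed

lemma gdist_refl: "gdist E a a = 0"
proof -
  have "walk_betw E a [a] a" by (auto simp: walk_betw_def walk_def)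
  then show ?thesis using gdist_le by fastforce
qed

lemma gdist_0: "reach E a b \<Longrightarrow> gdist E a b = 0 \<Longrightarrow> a = b"
proof -
  assume "reach E a b" "gdist E a b = 0"
  then obtain ys where "walk_betw E a ys b" "length ys = 1" using gdist_ex by fastforce
  then show ?thesis by (cases ys) (auto simp: walk_betw_def)
qed

lemma last_step:
  assumes "reach E a b" "a \<noteq> b"
  shows "\<exists>n. {n, b} \<in> E \<and> reach E a n \<and> gdist E a b = Suc (gdist E a n)"
proof -
  obtain ys where w: "walk_betw E a ys b" and l: "length ys = Suc (gdist E a b)"
    using gdist_ex[OF assms(1)] by blast
  have "ys \<noteq> []" using w by (simp add: walk_betw_def walk_def)
  then have ys: "ys = butlast ys @ [b]" using w
    by (metis append_butlast_last_id walk_betw_def)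
  define zs where "zs = butlast ys"
  have zne: "zs \<noteq> []" using w assms(2) ys unfolding zs_def walk_betw_def
    by (metis append_Nil list.sel(1) last_snoc)
  have wz: "walk E zs" "{last zs, b} \<in> E" using w ys zne unfolding zs_def walk_betw_def
    by (metis walk_snoc)+
  have hz: "hd zs = a" using w ys zne unfolding zs_def walk_betw_def by (metis hd_append2)
  have wb: "walk_betw E a zs (last zs)" using wz hz by (simp add: walk_betw_def)
  then have r: "reach E a (last zs)" by (auto simp: reach_def)
  have "gdist E a (last zs) + 1 \<le> length zs" using gdist_le[OF wb] .
  moreover have "length ys = Suc (length zs)" using ys unfolding zs_def by (metis length_append_singleton)
  moreover have "gdist E a b \<le> gdist E a (last zs) + gdist E (last zs) b"
    using gdist_tri[OF r reach_edge[OF wz(2)]] .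
  moreover have "gdist E (last zs) b \<le> 1" using gdist_edge[OF wz(2)] .
  ultimately have "gdist E a b = Suc (gdist E a (last zs))" using l by linarith
  then show ?thesis using wz(2) r by blast
qed




lemma sub_edge: "g \<in> E \<Longrightarrow> x \<in> g \<Longrightarrow> {Inl x, Inr g} \<in> subdiv_E E"
  unfolding subdiv_E_def by blast

lemma sub_edge': "g \<in> E \<Longrightarrow> x \<in> g \<Longrightarrow> {Inr g, Inl x} \<in> subdiv_E E"
  using sub_edge by (metis insert_commute)

lemma simple_endpoints:
  assumes "simple_graph V E" "g \<in> E"
  shows "g \<subseteq> V"
proof -
  obtain x y where "x \<in> V" "y \<in> V" "g = {x, y}" using assms unfolding simple_graph_def by meson
  then show ?thesis by simp
qed

lemma simple_other:
  assumes "simple_graph V E" "g \<in> E" "c \<in> g" "x \<in> g" "c \<noteq> x"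
  shows "g = {c, x}"
proof -
  obtain p q where "g = {p, q}" using assms unfolding simple_graph_def by meson
  then show ?thesis using assms(3-5) by auto
qed

lemma sub_edge_cases:
  assumes "{p, q} \<in> subdiv_E E"
  shows "\<exists>x g. g \<in> E \<and> x \<in> g \<and> ((p = Inl x \<and> q = Inr g) \<or> (p = Inr g \<and> q = Inl x))"
proof -
  obtain x g where "g \<in> E" "x \<in> g" "{p, q} = {Inl x, Inr g}"
    using assms unfolding subdiv_E_def by blast
  then show ?thesis by (auto simp: doubleton_eq_iff)
qed
lemma lift_walk:
  assumes "walk E xs"
  shows "\<exists>ws. walk (subdiv_E E) ws \<and> hd ws = Inl (hd xs) \<and> last ws = Inl (last xs)
              \<and> length ws = 2 * length xs - 1"
  using assms
proof (induction xs rule: rev_induct)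
  case Nil then show ?case by (simp add: walk_def)
next
  case (snoc z xs)
  show ?case
  proof (cases "xs = []")
    case True
    then show ?thesis by (intro exI[of _ "[Inl z]"]) (simp add: walk_def)
  next
    case False
    with snoc.prems have w: "walk E xs" and l: "{last xs, z} \<in> E" by (auto simp: walk_snoc)
    obtain ws where ws: "walk (subdiv_E E) ws" "hd ws = Inl (hd xs)" "last ws = Inl (last xs)"
      "length ws = 2 * length xs - 1" using snoc.IH w by blast
    have wsne: "ws \<noteq> []" using ws(1) by (simp add: walk_def)
    have e1: "{last ws, Inr {last xs, z}} \<in> subdiv_E E" using ws(3) sub_edge[OF l] by simp
    have w1: "walk (subdiv_E E) (ws @ [Inr {last xs, z}])" using ws(1) e1 by (simp add: walk_snoc)
    have e2: "{last (ws @ [Inr {last xs, z}]), Inl z} \<in> subdiv_E E" using sub_edge'[OF l] by simp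
    have w2: "walk (subdiv_E E) ((ws @ [Inr {last xs, z}]) @ [Inl z])"
      using w1 e2 by (simp only: walk_snoc) simp
    show ?thesis
      apply (rule exI[of _ "(ws @ [Inr {last xs, z}]) @ [Inl z]"])
      using w2 ws wsne False by (auto simp: hd_append)
  qed
qed

context
  fixes V :: "'a set" and E :: "'a set set"
  assumes sg: "simple_graph V E" and cg: "connected_graph V E"
begin

lemma reachG: "a \<in> V \<Longrightarrow> b \<in> V \<Longrightarrow> reach E a b"
  using cg unfolding connected_graph_def reach_def by blast

lemma gdist_edge_step:
  assumes "a \<in> V" "{c, x} \<in> E"
  shows "gdist E a x \<le> gdist E a c + 1"
proof -
  have "c \<in> V" using simple_endpoints[OF sg assms(2)] by blast
  have "gdist E a x \<le> gdist E a c + gdist E c x"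
    using gdist_tri[OF reachG[OF assms(1) \<open>c \<in> V\<close>] reach_edge[OF assms(2)]] .
  then show ?thesis using gdist_edge[OF assms(2)] by linarith
qed

lemma proj_walk:
  assumes "a \<in> V"
  shows "walk (subdiv_E E) ws \<Longrightarrow> hd ws = Inl a \<Longrightarrow>
    (\<forall>b. last ws = Inl b \<longrightarrow> 2 * gdist E a b + 1 \<le> length ws) \<and>
    (\<forall>g. last ws = Inr g \<longrightarrow> (\<exists>c\<in>g. 2 * gdist E a c + 2 \<le> length ws))"
proof (induction ws rule: rev_induct)
  case Nil then show ?case by (simp add: walk_def)
next
  case (snoc z ws)
  show ?case
  proof (cases "ws = []")
    case True
    then show ?thesis using snoc.prems by (simp add: gdist_refl)
  next
    case False
    with snoc.prems have w: "walk (subdiv_E E) ws" and l: "{last ws, z} \<in> subdiv_E E"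
      and h: "hd ws = Inl a" by (auto simp: walk_snoc)
    note IH = snoc.IH[OF w h]
    obtain x g where g: "g \<in> E" "x \<in> g" and
      c: "(last ws = Inl x \<and> z = Inr g) \<or> (last ws = Inr g \<and> z = Inl x)"
      using sub_edge_cases[OF l] by blast
    show ?thesis
    proof (cases "last ws = Inl x \<and> z = Inr g")
      case True
      then have "2 * gdist E a x + 1 \<le> length ws" using IH by blast
      then show ?thesis using True g by auto
    next
      case False
      with c have lz: "last ws = Inr g" "z = Inl x" by auto
      obtain c' where c': "c' \<in> g" "2 * gdist E a c' + 2 \<le> length ws" using IH lz by blast
      have "2 * gdist E a x + 1 \<le> length ws + 1"
      proof (cases "c' = x")
        case True then show ?thesis using c' by simp
      next
        case False
        then have "g = {c', x}" using simple_other[OF sg g(1) c'(1) g(2)] by simp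
        then have "gdist E a x \<le> gdist E a c' + 1" using gdist_edge_step[OF assms, of c' x] g(1) by simp
        then show ?thesis using c' by linarith
      qed
      then show ?thesis using lz by simp
    qed
  qed
qed

lemma reachS: "a \<in> V \<Longrightarrow> b \<in> V \<Longrightarrow> reach (subdiv_E E) (Inl a) (Inl b)"
proof -
  assume "a \<in> V" "b \<in> V"
  then have "reach E a b" by (rule reachG)
  then obtain xs where "walk_betw E a xs b" unfolding reach_def by blast
  then have "walk E xs" "hd xs = a" "last xs = b" unfolding walk_betw_def by auto
  then obtain ws where "walk (subdiv_E E) ws" "hd ws = Inl a" "last ws = Inl b"
    using lift_walk[of E xs] by auto
  then show ?thesis unfolding reach_def walk_betw_def by blast
qed

lemma distS: "a \<in> V \<Longrightarrow> b \<in> V \<Longrightarrow> gdist (subdiv_E E) (Inl a) (Inl b) = 2 * gdist E a b"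
proof -
  assume a: "a \<in> V" and b: "b \<in> V"
  obtain xs where xs: "walk_betw E a xs b" "length xs = Suc (gdist E a b)"
    using gdist_ex[OF reachG[OF a b]] by blast
  then have "walk E xs" "hd xs = a" "last xs = b" unfolding walk_betw_def by auto
  then obtain ws where ws: "walk (subdiv_E E) ws" "hd ws = Inl a" "last ws = Inl b"
    "length ws = 2 * length xs - 1"
    using lift_walk[of E xs] by auto
  then have "walk_betw (subdiv_E E) (Inl a) ws (Inl b)" unfolding walk_betw_def by simp
  then have "gdist (subdiv_E E) (Inl a) (Inl b) + 1 \<le> length ws" by (rule gdist_le)
  then have 1: "gdist (subdiv_E E) (Inl a) (Inl b) \<le> 2 * gdist E a b"
    using ws(4) xs(2) by simp
  obtain ys where ys: "walk_betw (subdiv_E E) (Inl a) ys (Inl b)"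
    "length ys = Suc (gdist (subdiv_E E) (Inl a) (Inl b))"
    using gdist_ex[OF reachS[OF a b]] by blast
  then have "walk (subdiv_E E) ys" "hd ys = Inl a" "last ys = Inl b" unfolding walk_betw_def by auto
  then have "2 * gdist E a b + 1 \<le> length ys"
    using proj_walk[OF a, of ys] by blast
  then show ?thesis using ys(2) 1 by linarith
qed

end




lemma notTheta: "\<not> Theta E' {a, b} {c, d} \<Longrightarrow> gdist E' a c + gdist E' b d = gdist E' a d + gdist E' b c"
  unfolding Theta_def by blast

lemma ThetaI: "gdist E' a c + gdist E' b d \<noteq> gdist E' a d + gdist E' b c \<Longrightarrow> Theta E' {a, b} {c, d}"
  unfolding Theta_def by blast

lemma bip_edge:
  assumes "simple_graph V E" "\<forall>e\<in>E. card (e \<inter> A) = 1" "{p, q} \<in> E"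
  shows "p \<in> A \<longleftrightarrow> q \<notin> A"
proof -
  obtain x y where "x \<noteq> y" "{p, q} = {x, y}" using assms(1,3) unfolding simple_graph_def by meson
  then have pq: "p \<noteq> q" by (auto simp: doubleton_eq_iff)
  have c: "card ({p, q} \<inter> A) = 1" using assms(2,3) by blast
  show ?thesis
  proof (cases "p \<in> A")
    case True
    show ?thesis
    proof (rule iffI)
      show "q \<notin> A"
      proof
        assume "q \<in> A"
        then have "{p, q} \<inter> A = {p, q}" using True by auto
        then show False using c pq by simp
      qed
    qed (use True in simp)
  next
    case False
    show ?thesis
    proof (rule iffI)
      assume "q \<notin> A"
      then have "{p, q} \<inter> A = {}" using False by auto
      then show "p \<in> A" using c by simp
    qed (use False in simp)
  qed
qed

lemma bip_walk:
  assumes "simple_graph V E" "\<forall>e\<in>E. card (e \<inter> A) = 1"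
  shows "walk E xs \<Longrightarrow> ((hd xs \<in> A) \<longleftrightarrow> (last xs \<in> A)) \<longleftrightarrow> odd (length xs)"
proof (induction xs rule: rev_induct)
  case Nil then show ?case by (simp add: walk_def)
next
  case (snoc z xs)
  show ?case
  proof (cases "xs = []")
    case True then show ?thesis by simp
  next
    case False
    with snoc.prems have w: "walk E xs" and l: "{last xs, z} \<in> E" by (auto simp: walk_snoc)
    have "last xs \<in> A \<longleftrightarrow> z \<notin> A" using bip_edge[OF assms l] .
    then show ?thesis using snoc.IH[OF w] False by (auto simp: hd_append)
  qed
qed

context
  fixes V :: "'a set" and E :: "'a set set"
  assumes sg: "simple_graph V E" and cg: "connected_graph V E"
begin

lemma bip_dist:
  assumes "\<forall>e\<in>E. card (e \<inter> A) = 1" "a \<in> V" "b \<in> V"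
  shows "((a \<in> A) \<longleftrightarrow> (b \<in> A)) \<longleftrightarrow> even (gdist E a b)"
proof -
  obtain xs where "walk_betw E a xs b" "length xs = Suc (gdist E a b)"
    using gdist_ex[OF reachG[OF sg cg assms(2,3)]] by blast
  then show ?thesis using bip_walk[OF sg assms(1), of xs] unfolding walk_betw_def by simp
qed

lemma reach_mid:
  assumes "g \<in> E" "a \<in> V"
  shows "reach (subdiv_E E) (Inl a) (Inr g)" "reach (subdiv_E E) (Inr g) (Inl a)"
proof -
  obtain c where c: "c \<in> g" using assms(1) sg unfolding simple_graph_def by blast
  have cV: "c \<in> V" using simple_endpoints[OF sg assms(1)] c by blast
  have "reach (subdiv_E E) (Inl a) (Inl c)" using reachS[OF sg cg assms(2) cV] .
  moreover have "reach (subdiv_E E) (Inl c) (Inr g)" using reach_edge[OF sub_edge[OF assms(1) c]] .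
  ultimately show r: "reach (subdiv_E E) (Inl a) (Inr g)" by (rule reach_trans)
  show "reach (subdiv_E E) (Inr g) (Inl a)" using reach_sym[OF r] .
qed

lemma mid_lemma:
  assumes f: "f = {u, v}" "f \<in> E" and r: "reach (subdiv_E E) w (Inl u)" and ne: "w \<noteq> Inr f"
  shows "gdist (subdiv_E E) w (Inr f) \<le> gdist (subdiv_E E) w (Inl u) + 1"
    "gdist (subdiv_E E) w (Inr f) \<le> gdist (subdiv_E E) w (Inl v) + 1"
    "gdist (subdiv_E E) w (Inr f) = gdist (subdiv_E E) w (Inl u) + 1 \<or>
     gdist (subdiv_E E) w (Inr f) = gdist (subdiv_E E) w (Inl v) + 1"
proof -
  let ?S = "subdiv_E E"
  have eu: "{Inl u, Inr f} \<in> ?S" using sub_edge[OF f(2)] f(1) by simp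
  have ev: "{Inr f, Inl v} \<in> ?S" using sub_edge'[OF f(2)] f(1) by simp
  have ev': "{Inl v, Inr f} \<in> ?S" using sub_edge[OF f(2)] f(1) by simp
  have rf: "reach ?S w (Inr f)" using reach_trans[OF r reach_edge[OF eu]] .
  have rv: "reach ?S w (Inl v)" using reach_trans[OF rf reach_edge[OF ev]] .
  have "gdist ?S w (Inr f) \<le> gdist ?S w (Inl u) + gdist ?S (Inl u) (Inr f)"
    using gdist_tri[OF r reach_edge[OF eu]] .
  then show 1: "gdist ?S w (Inr f) \<le> gdist ?S w (Inl u) + 1" using gdist_edge[OF eu] by linarith
  have "gdist ?S w (Inr f) \<le> gdist ?S w (Inl v) + gdist ?S (Inl v) (Inr f)"
    using gdist_tri[OF rv reach_edge[OF ev']] .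
  then show 2: "gdist ?S w (Inr f) \<le> gdist ?S w (Inl v) + 1" using gdist_edge[OF ev'] by linarith
  obtain n where n: "{n, Inr f} \<in> ?S" "gdist ?S w (Inr f) = Suc (gdist ?S w n)"
    using last_step[OF rf ne] by blast
  obtain x g where "g \<in> E" "x \<in> g" "(n = Inl x \<and> Inr f = Inr g) \<or> (n = Inr g \<and> Inr f = Inl x)"
    using sub_edge_cases[OF n(1)] by blast
  then have "n = Inl x" "x \<in> f" by auto
  then have "n = Inl u \<or> n = Inl v" using f(1) by auto
  then show "gdist ?S w (Inr f) = gdist ?S w (Inl u) + 1 \<or>
     gdist ?S w (Inr f) = gdist ?S w (Inl v) + 1" using n(2) by auto
qed

lemma core:
  assumes e: "e = {x, y}" "e \<in> E" and f: "f = {u, v}" "f \<in> E" and ef: "e \<noteq> f"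
    and d1: "gdist E x u = k" and d2: "gdist E y v = k"
    and d3: "gdist E x v = k + 1" and d4: "gdist E y u = k + 1"
  shows "Theta (subdiv_E E) (half_edge e x) (half_edge f v) \<and>
         Theta (subdiv_E E) (half_edge e y) (half_edge f u)"
proof -
  let ?S = "subdiv_E E"
  have V: "x \<in> V" "y \<in> V" "u \<in> V" "v \<in> V"
    using simple_endpoints[OF sg e(2)] simple_endpoints[OF sg f(2)] e(1) f(1) by auto
  have xu: "gdist ?S (Inl x) (Inl u) = 2 * k" using distS[OF sg cg V(1,3)] d1 by simp
  have xv: "gdist ?S (Inl x) (Inl v) = 2 * k + 2" using distS[OF sg cg V(1,4)] d3 by simp
  have yu: "gdist ?S (Inl y) (Inl u) = 2 * k + 2" using distS[OF sg cg V(2,3)] d4 by simp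
  have yv: "gdist ?S (Inl y) (Inl v) = 2 * k" using distS[OF sg cg V(2,4)] d2 by simp
  have ux: "gdist ?S (Inl u) (Inl x) = 2 * k" using xu gdist_sym by metis
  have vx: "gdist ?S (Inl v) (Inl x) = 2 * k + 2" using xv gdist_sym by metis
  have uy: "gdist ?S (Inl u) (Inl y) = 2 * k + 2" using yu gdist_sym by metis
  have vy: "gdist ?S (Inl v) (Inl y) = 2 * k" using yv gdist_sym by metis
  have xf: "gdist ?S (Inl x) (Inr f) = 2 * k + 1"
    using mid_lemma[OF f reachS[OF sg cg V(1,3)]] xu xv by auto
  have yf: "gdist ?S (Inl y) (Inr f) = 2 * k + 1"
    using mid_lemma[OF f reachS[OF sg cg V(2,3)]] yu yv by auto
  have ue: "gdist ?S (Inl u) (Inr e) = 2 * k + 1"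
    using mid_lemma[OF e reachS[OF sg cg V(3,1)]] ux uy by auto
  have ve: "gdist ?S (Inl v) (Inr e) = 2 * k + 1"
    using mid_lemma[OF e reachS[OF sg cg V(4,1)]] vx vy by auto
  have eu: "gdist ?S (Inr e) (Inl u) = 2 * k + 1" using ue gdist_sym by metis
  have ev: "gdist ?S (Inr e) (Inl v) = 2 * k + 1" using ve gdist_sym by metis
  have ref: "gdist ?S (Inr e) (Inr f) = 2 * k + 2"
    using mid_lemma[OF f reach_mid(2)[OF e(2) V(3)]] eu ev ef by auto
  have "Theta ?S {Inl x, Inr e} {Inl v, Inr f}"
    by (rule ThetaI) (simp add: xv ref xf ev)
  moreover have "Theta ?S {Inl y, Inr e} {Inl u, Inr f}"
    by (rule ThetaI) (simp add: yu ref yf eu)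
  ultimately show ?thesis by (simp add: half_edge_def)
qed

end




lemma arith4:
  fixes a b c d :: nat
  assumes "even a \<noteq> even b" "even c \<noteq> even d" "even a \<noteq> even c" "even b \<noteq> even d"
    "a \<le> b + 1" "b \<le> a + 1" "c \<le> d + 1" "d \<le> c + 1" "a \<le> c + 1" "c \<le> a + 1" "b \<le> d + 1" "d \<le> b + 1"
    "a + d \<noteq> b + c"
  shows "(d = a \<and> c = b \<and> b = a + 1) \<or> (d = a \<and> c = b \<and> a = b + 1)"
proof -
  have "a = b + 1 \<or> b = a + 1" using assms(1,5,6) by presburger
  moreover have "c = d + 1 \<or> d = c + 1" using assms(2,7,8) by presburger
  moreover have "a = c + 1 \<or> c = a + 1" using assms(3,9,10) by presburger
  moreover have "b = d + 1 \<or> d = b + 1" using assms(4,11,12) by presburger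
  ultimately show ?thesis using assms(13) by linarith
qed

lemma half_edge_eq: "half_edge e a = half_edge f b \<longleftrightarrow> e = f \<and> a = b"
  unfolding half_edge_def by (auto simp: doubleton_eq_iff)

theorem lemma3p3:
  fixes V :: "'a set" and E :: "'a set set" and e f :: "'a set"
  assumes "finite V" and "simple_graph V E" and "connected_graph V E"
    and "e \<in> E" and "f \<in> E" and "Theta E e f"
  shows "(\<exists>x\<in>e. \<exists>u\<in>f. Theta (subdiv_E E) (half_edge e x) (half_edge f u))
    \<and> (bipartite V E \<longrightarrow>
        (\<exists>x\<in>e. \<exists>u\<in>f. \<exists>x'\<in>e. \<exists>u'\<in>f.
           Theta (subdiv_E E) (half_edge e x) (half_edge f u)
         \<and> Theta (subdiv_E E) (half_edge e x') (half_edge f u')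
         \<and> {half_edge e x, half_edge f u} \<inter> {half_edge e x', half_edge f u'} = {}))"
proof -
  note sg = assms(2) and cg = assms(3)
  let ?S = "subdiv_E E"
  obtain x y u v where e: "e = {x, y}" and f: "f = {u, v}"
    and ineq: "gdist E x u + gdist E y v \<noteq> gdist E x v + gdist E y u"
    using assms(6) unfolding Theta_def by blast
  have V: "x \<in> V" "y \<in> V" "u \<in> V" "v \<in> V"
    using simple_endpoints[OF sg assms(4)] simple_endpoints[OF sg assms(5)] e f by auto
  have xy: "x \<noteq> y"
  proof
    assume "x = y"
    obtain p q where "p \<noteq> q" "e = {p, q}" using sg assms(4) unfolding simple_graph_def by meson
    then show False using e \<open>x = y\<close> by (auto simp: doubleton_eq_iff)
  qed
  have uv: "u \<noteq> v"
  proof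
    assume "u = v"
    obtain p q where "p \<noteq> q" "f = {p, q}" using sg assms(5) unfolding simple_graph_def by meson
    then show False using f \<open>u = v\<close> by (auto simp: doubleton_eq_iff)
  qed
  have partA: "\<exists>x\<in>e. \<exists>u\<in>f. Theta ?S (half_edge e x) (half_edge f u)"
  proof (rule ccontr)
    assume na: "\<not> ?thesis"
    have h1: "\<not> Theta ?S {Inl x, Inr e} {Inl u, Inr f}" using na e f by (auto simp: half_edge_def)
    have h2: "\<not> Theta ?S {Inl x, Inr e} {Inl v, Inr f}" using na e f by (auto simp: half_edge_def)
    have h3: "\<not> Theta ?S {Inl y, Inr e} {Inl u, Inr f}" using na e f by (auto simp: half_edge_def)
    have h4: "\<not> Theta ?S {Inl y, Inr e} {Inl v, Inr f}" using na e f by (auto simp: half_edge_def)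
    note q1 = notTheta[OF h1] and q2 = notTheta[OF h2] and q3 = notTheta[OF h3] and q4 = notTheta[OF h4]
    have "gdist ?S (Inl x) (Inl u) + gdist ?S (Inl y) (Inl v) =
          gdist ?S (Inl x) (Inl v) + gdist ?S (Inl y) (Inl u)"
      using q1 q2 q3 q4 by linarith
    then show False using ineq distS[OF sg cg] V by simp
  qed
  have partB: "\<exists>x\<in>e. \<exists>u\<in>f. \<exists>x'\<in>e. \<exists>u'\<in>f.
           Theta ?S (half_edge e x) (half_edge f u)
         \<and> Theta ?S (half_edge e x') (half_edge f u')
         \<and> {half_edge e x, half_edge f u} \<inter> {half_edge e x', half_edge f u'} = {}"
    if bip: "bipartite V E"
  proof (cases "e = f")
    case True
    have th: "Theta ?S (half_edge e z) (half_edge e z)" if z: "z \<in> e" for z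
    proof -
      have zV: "z \<in> V" using z V e by auto
      have ne: "Inl z \<noteq> Inr e" by simp
      have "gdist ?S (Inl z) (Inr e) \<noteq> 0"
      proof
        assume "gdist ?S (Inl z) (Inr e) = 0"
        then have "Inl z = Inr e" using gdist_0[OF reach_mid(1)[OF sg cg assms(4) zV]] by simp
        then show False using ne by simp
      qed
      then have "Theta ?S {Inl z, Inr e} {Inl z, Inr e}" by (intro ThetaI) (simp add: gdist_refl)
      then show ?thesis by (simp add: half_edge_def)
    qed
    have hxy: "half_edge e x \<noteq> half_edge e y" using xy
      unfolding half_edge_def by (auto simp: doubleton_eq_iff)
    have d: "{half_edge e x, half_edge f x} \<inter> {half_edge e y, half_edge f y} = {}"
      using True hxy by simp
    have xe: "x \<in> e" "y \<in> e" using e by simp_all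
    show ?thesis
      apply (rule bexI[OF _ xe(1)], rule bexI[of _ x], rule bexI[OF _ xe(2)], rule bexI[of _ y])
      using th[OF xe(1)] th[OF xe(2)] d True xe by simp_all
  next
    case False
    obtain A where A: "\<forall>g\<in>E. card (g \<inter> A) = 1" using bip unfolding bipartite_def by blast
    have euv: "{u, v} \<in> E" "{v, u} \<in> E" using assms(5) f by (auto simp: insert_commute)
    have exy: "{x, y} \<in> E" "{y, x} \<in> E" using assms(4) e by (auto simp: insert_commute)
    have pu: "u \<in> A \<longleftrightarrow> v \<notin> A" using bip_edge[OF sg A euv(1)] .
    have px: "x \<in> A \<longleftrightarrow> y \<notin> A" using bip_edge[OF sg A exy(1)] .
    have p1: "((x \<in> A) \<longleftrightarrow> (u \<in> A)) \<longleftrightarrow> even (gdist E x u)" using bip_dist[OF sg cg A V(1,3)] .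
    have p2: "((x \<in> A) \<longleftrightarrow> (v \<in> A)) \<longleftrightarrow> even (gdist E x v)" using bip_dist[OF sg cg A V(1,4)] .
    have p3: "((y \<in> A) \<longleftrightarrow> (u \<in> A)) \<longleftrightarrow> even (gdist E y u)" using bip_dist[OF sg cg A V(2,3)] .
    have p4: "((y \<in> A) \<longleftrightarrow> (v \<in> A)) \<longleftrightarrow> even (gdist E y v)" using bip_dist[OF sg cg A V(2,4)] .
    have par: "even (gdist E x u) \<noteq> even (gdist E x v)" "even (gdist E y u) \<noteq> even (gdist E y v)"
      "even (gdist E x u) \<noteq> even (gdist E y u)" "even (gdist E x v) \<noteq> even (gdist E y v)"
      using p1 p2 p3 p4 pu px by blast+
    have s1: "gdist E x u \<le> gdist E x v + 1" using gdist_edge_step[OF sg cg V(1) euv(2)] .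
    have s2: "gdist E x v \<le> gdist E x u + 1" using gdist_edge_step[OF sg cg V(1) euv(1)] .
    have s3: "gdist E y u \<le> gdist E y v + 1" using gdist_edge_step[OF sg cg V(2) euv(2)] .
    have s4: "gdist E y v \<le> gdist E y u + 1" using gdist_edge_step[OF sg cg V(2) euv(1)] .
    have s5: "gdist E x u \<le> gdist E y u + 1"
      using gdist_edge_step[OF sg cg V(3) exy(2)] gdist_sym by metis
    have s6: "gdist E y u \<le> gdist E x u + 1"
      using gdist_edge_step[OF sg cg V(3) exy(1)] gdist_sym by metis
    have s7: "gdist E x v \<le> gdist E y v + 1"
      using gdist_edge_step[OF sg cg V(4) exy(2)] gdist_sym by metis
    have s8: "gdist E y v \<le> gdist E x v + 1"
      using gdist_edge_step[OF sg cg V(4) exy(1)] gdist_sym by metis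
    define a where "a = gdist E x u"
    define b where "b = gdist E x v"
    define c where "c = gdist E y u"
    define d where "d = gdist E y v"
    have "(d = a \<and> c = b \<and> b = a + 1) \<or> (d = a \<and> c = b \<and> a = b + 1)"
      using arith4[OF par s1 s2 s3 s4 s5 s6 s7 s8] ineq unfolding a_def b_def c_def d_def
      by linarith
    then show ?thesis
    proof
      assume h: "d = a \<and> c = b \<and> b = a + 1"
      have "Theta ?S (half_edge e x) (half_edge f v) \<and> Theta ?S (half_edge e y) (half_edge f u)"
        using core[OF sg cg e assms(4) f assms(5) False, of a] h a_def b_def c_def d_def by simp
      moreover have "{half_edge e x, half_edge f v} \<inter> {half_edge e y, half_edge f u} = {}"
        using False xy uv by (simp add: half_edge_eq)
      ultimately show ?thesis
        apply -
        apply (rule bexI[of _ x], rule bexI[of _ v], rule bexI[of _ y], rule bexI[of _ u])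
        using e f by simp_all
    next
      assume h: "d = a \<and> c = b \<and> a = b + 1"
      have f': "f = {v, u}" using f by (simp add: insert_commute)
      have "Theta ?S (half_edge e x) (half_edge f u) \<and> Theta ?S (half_edge e y) (half_edge f v)"
        using core[OF sg cg e assms(4) f' assms(5) False, of b] h a_def b_def c_def d_def by simp
      moreover have "{half_edge e x, half_edge f u} \<inter> {half_edge e y, half_edge f v} = {}"
        using False xy uv by (simp add: half_edge_eq)
      ultimately show ?thesis
        apply -
        apply (rule bexI[of _ x], rule bexI[of _ u], rule bexI[of _ y], rule bexI[of _ v])
        using e f by simp_all
    qed
  qed
  show ?thesis using partA partB by blast
qed


end
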